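(* Let $r \in \mathbb{Q}_{>0}$ be such that $S_r$ is atomic. The following are equivalent: (1) $r \in \mathbb{N}$; (2) $\omega(S_r) < \infty$; (3) $S_r$ is globally tame; (4) $S_r$ is locally tame.
   Context: For $q \in \mathbb{Q}_{>0}$, $\mathsf{n}(q),\mathsf{d}(q)$ are the positive coprime integers with $q = \mathsf{n}(q)/\mathsf{d}(q)$. $S_r$ is the additive submonoid of $(\mathbb{Q}_{\ge 0},+)$ generated by $\{r^n : n \in \mathbb{N}_0\}$; it is atomic exactly when $r=1$ or $\mathsf{n}(r)>1$. For $x,y \in S_r$, $x \mid_{S_r} y$ means $y = x + w$ for some $w \in S_r$. Omega function: for $x \ne 0$, $\omega(x)$ is the smallest $n \in \mathbb{N}$ such that whenever $x \mid_{S_r} a_1 + \dots + a_t$ for atoms $a_i$, there is $T \subseteq \{1,\dots,t\}$ with $|T| \le n$ and $x \mid_{S_r} \sum_{i \in T} a_i$ (and $\omega(x) = \infty$ if none exists); $\omega(S_r) = \sup\{\omega(a) : a \text{ an atom}\}$. Factorizations are elements of the free commutative monoid $\mathsf{Z}(S_r)$ on the atoms; $\mathsf{Z}(x)$ is the set of factorizations of $x$, $|z|$ is the length. For $z = \sum_a \mu_a a$, $z' = \sum_a \nu_a a$, $\gcd(z,z') = \sum_a \min\{\mu_a,\nu_a\}a$ and $\mathsf{d}(z,z') = \max\{|z|-|\gcd(z,z')|, |z'|-|\gcd(z,z')|\}$. For an atom $a$, the local tame degree $\mathsf{t}(a)$ is the smallest $n \in \mathbb{N}_0 \cup \{\infty\}$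 such that for every $x \in S_r$ with $a \mid_{S_r} x$ and every $z \in \mathsf{Z}(x)$ there exists $z' \in \mathsf{Z}(x)$ containing $a$ with $\mathsf{d}(z,z') \le n$. $S_r$ is locally tame if $\mathsf{t}(a) < \infty$ for every atom $a$, and globally tame if $\mathsf{t}(S_r) = \sup_a \mathsf{t}(a) < \infty$. *)

theory Defs
  imports Complex_Main "HOL-Library.Multiset" "HOL-Library.Extended_Nat"
begin

inductive_set Sr :: "rat \<Rightarrow> rat set" for r :: rat where
  zero: "0 \<in> Sr r"
| gen: "r ^ n \<in> Sr r"
| add: "x \<in> Sr r \<Longrightarrow> y \<in> Sr r \<Longrightarrow> x + y \<in> Sr r"

definition dvdS :: "rat \<Rightarrow> rat \<Rightarrow> rat \<Rightarrow> bool" where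
  "dvdS r x y \<longleftrightarrow> (\<exists>w \<in> Sr r. y = x + w)"

text \<open>Atoms of S_r (the only unit of S_r is 0).\<close>
definition atomsS :: "rat \<Rightarrow> rat set" where
  "atomsS r = {a \<in> Sr r. a \<noteq> 0 \<and>
      (\<forall>b \<in> Sr r. \<forall>c \<in> Sr r. a = b + c \<longrightarrow> b = 0 \<or> c = 0)}"

definition factorizations :: "rat \<Rightarrow> rat \<Rightarrow> rat multiset set" where
  "factorizations r x = {z. set_mset z \<subseteq> atomsS r \<and> sum_mset z = x}"

definition atomic :: "rat \<Rightarrow> bool" where
  "atomic r \<longleftrightarrow> (\<forall>x \<in> Sr r. x \<noteq> 0 \<longrightarrow> factorizations r x \<noteq> {})"

definition omega_bound :: "rat \<Rightarrow> rat \<Rightarrow> nat \<Rightarrow> bool" where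
  "omega_bound r x n \<longleftrightarrow>
     (\<forall>A :: rat multiset. set_mset A \<subseteq> atomsS r \<longrightarrow> dvdS r x (sum_mset A) \<longrightarrow>
        (\<exists>B. B \<subseteq># A \<and> size B \<le> n \<and> dvdS r x (sum_mset B)))"

definition omegaS :: "rat \<Rightarrow> rat \<Rightarrow> enat" where
  "omegaS r x = (if \<exists>n>0. omega_bound r x n
                 then enat (LEAST n. n > 0 \<and> omega_bound r x n) else \<infinity>)"

definition omega_monoid :: "rat \<Rightarrow> enat" where
  "omega_monoid r = (SUP a \<in> atomsS r. omegaS r a)"

definition fdist :: "rat multiset \<Rightarrow> rat multiset \<Rightarrow> nat" where
  "fdist z z' = max (size z - size (z \<inter># z')) (size z' - size (z \<inter># z'))"

definition tame_bound :: "rat \<Rightarrow> rat \<Rightarrow> nat \<Rightarrow> bool" where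
  "tame_bound r a n \<longleftrightarrow>
     (\<forall>x \<in> Sr r. dvdS r a x \<longrightarrow> (\<forall>z \<in> factorizations r x.
        \<exists>z' \<in> factorizations r x. a \<in># z' \<and> fdist z z' \<le> n))"

definition tame_degree :: "rat \<Rightarrow> rat \<Rightarrow> enat" where
  "tame_degree r a = (if \<exists>n. tame_bound r a n
                      then enat (LEAST n. tame_bound r a n) else \<infinity>)"

definition locally_tame :: "rat \<Rightarrow> bool" where
  "locally_tame r \<longleftrightarrow> (\<forall>a \<in> atomsS r. tame_degree r a < \<infinity>)"

definition globally_tame :: "rat \<Rightarrow> bool" where
  "globally_tame r \<longleftrightarrow> (SUP a \<in> atomsS r. tame_degree r a) < \<infinity>"

end

theory Submission
  imports Defs
begin



lemma Sr_nonneg: assumes "r > 0" "x \<in> Sr r" shows "x \<ge> 0"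
  using assms(2) by (induction rule: Sr.induct) (auto simp: assms(1) less_imp_le)

lemma Sr_ge1: assumes "r \<ge> 1" "x \<in> Sr r" shows "x = 0 \<or> x \<ge> 1"
  using assms(2) by (induction rule: Sr.induct) (auto simp: one_le_power assms(1))

lemma Sr_one: "1 \<in> Sr r"
  using Sr.gen[of r 0] by simp

lemma Sr_nat: "of_nat k \<in> Sr r"
proof (induction k)
  case 0 then show ?case by (simp add: Sr.zero)
next
  case (Suc k) then show ?case using Sr.add[OF Sr_one Suc] by simp
qed

lemma Sr_mult_nat: "x \<in> Sr r \<Longrightarrow> of_nat k * x \<in> Sr r"
proof (induction k)
  case 0 then show ?case by (simp add: Sr.zero)
next
  case (Suc k) then show ?case using Sr.add[OF Suc.prems Suc.IH] by (simp add: algebra_simps)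
qed

lemma Sr_sum_mset: "set_mset M \<subseteq> Sr r \<Longrightarrow> sum_mset M \<in> Sr r"
  by (induction M) (auto intro: Sr.add Sr.zero)

lemma Sr_pow_decomp: "x \<in> Sr r \<Longrightarrow> x \<noteq> 0 \<Longrightarrow> \<exists>n w. w \<in> Sr r \<and> x = r^n + w"
proof (induction rule: Sr.induct)
  case zero then show ?case by simp
next
  case (gen n) then show ?case using Sr.zero[of r] by (intro exI[of _ n] exI[of _ 0]) auto
next
  case (add x y)
  show ?case
  proof (cases "x = 0")
    case True then show ?thesis using add by auto
  next
    case False
    then obtain n w where "w \<in> Sr r" "x = r^n + w" using add by auto
    then show ?thesis using add Sr.add[of w r y] by (metis add.assoc)
  qed
qed

lemma atom_pow: "r > 0 \<Longrightarrow> a \<in> atomsS r \<Longrightarrow> \<exists>n. a = r^n"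
proof -
  assume r: "r > 0" and a: "a \<in> atomsS r"
  then have "a \<in> Sr r" "a \<noteq> 0" by (auto simp: atomsS_def)
  then obtain n w where w: "w \<in> Sr r" "a = r^n + w" using Sr_pow_decomp by blast
  have "r^n \<in> Sr r" by (rule Sr.gen)
  then have "r^n = 0 \<or> w = 0" using a w unfolding atomsS_def by blast
  then show ?thesis using r w by auto
qed

lemma atoms_sub: "r > 0 \<Longrightarrow> atomsS r \<subseteq> range (\<lambda>n. r^n)"
  using atom_pow by blast

lemma dvdS_le: "r > 0 \<Longrightarrow> dvdS r x y \<Longrightarrow> x \<le> y"
  unfolding dvdS_def using Sr_nonneg by fastforce

lemma Sr_den:
  assumes "r = of_nat p / of_nat q" "q > 0" "x \<in> Sr r"
  shows "\<exists>a j. x * of_nat (q^j) = of_nat a"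
  using assms(3)
proof (induction rule: Sr.induct)
  case zero then show ?case by auto
next
  case (gen n)
  have "r^n * of_nat (q^n) = of_nat (p^n)" using assms(1,2) by (simp add: power_divide)
  then show ?case by blast
next
  case (add x y)
  then obtain a i b j where ab: "x * of_nat (q^i) = of_nat a" "y * of_nat (q^j) = of_nat b" by blast
  have "(x+y) * of_nat (q^(i+j)) = of_nat (a * q^j + b * q^i)"
    using ab by (simp add: power_add algebra_simps) (metis mult.assoc mult.commute of_nat_mult)
  then show ?case by blast
qed

lemma Sr_den_r:
  assumes "r = of_nat p / of_nat q" "q > 0" "x \<in> Sr r"
  shows "\<exists>a j. r * x * of_nat (q^j) = of_nat (p * a)"
proof -
  obtain a j where a: "x * of_nat (q^j) = of_nat a" using Sr_den[OF assms] by blast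
  have "r * x * of_nat (q^(Suc j)) = of_nat p * (x * of_nat (q^j))"
    using assms(1,2) by (simp add: field_simps)
  also have "\<dots> = of_nat (p*a)" using a by simp
  finally show ?thesis by blast
qed

lemma Sr_split: "x \<in> Sr r \<Longrightarrow> \<exists>k y. y \<in> Sr r \<and> x = of_nat k + r * y"
proof (induction rule: Sr.induct)
  case zero then show ?case using Sr.zero by (metis add.right_neutral mult_zero_right of_nat_0)
next
  case (gen n)
  show ?case
  proof (cases n)
    case 0 then show ?thesis using Sr.zero by (intro exI[of _ 1] exI[of _ 0]) auto
  next
    case (Suc m) then show ?thesis using Sr.gen[of r m] by (intro exI[of _ 0] exI[of _ "r^m"]) auto
  qed
next
  case (add x y)
  then obtain k1 y1 k2 y2 where "y1 \<in> Sr r" "x = of_nat k1 + r*y1" "y2 \<in> Sr r" "y = of_nat k2 + r*y2" by blast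
  then show ?case using Sr.add[of y1 r y2]
    by (intro exI[of _ "k1+k2"] exI[of _ "y1+y2"]) (auto simp: algebra_simps)
qed




lemma rat_pq: fixes r :: rat assumes "r > 0"
  shows "\<exists>p q. r = of_nat p / of_nat q \<and> coprime p q \<and> p > 0 \<and> q > 0"
proof -
  obtain a b where ab: "quotient_of r = (a, b)" by (cases "quotient_of r")
  have b: "b > 0" using quotient_of_denom_pos[OF ab] .
  have rr: "r = of_int a / of_int b" using quotient_of_div[OF ab] .
  have cp: "coprime a b" using quotient_of_coprime[OF ab] .
  have "of_int a = r * of_int b" using rr b by simp
  then have "(of_int a :: rat) > 0" using assms b by simp
  then have a: "a > 0" by simp
  have "r = of_nat (nat a) / of_nat (nat b)" using rr a b by simp
  moreover have "coprime (nat a) (nat b)" using cp a b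
    by (simp add: coprime_int_iff[symmetric])
  ultimately show ?thesis using a b by (intro exI[of _ "nat a"] exI[of _ "nat b"]) auto
qed

lemma atom1_ge: assumes r: "r \<ge> 1" shows "1 \<in> atomsS r"
proof -
  { fix b c assume b: "b \<in> Sr r" and c: "c \<in> Sr r" and bc: "1 = b + c" and nz: "b \<noteq> 0" "c \<noteq> 0"
    have "b \<ge> 1" "c \<ge> 1" using Sr_ge1[OF r b] Sr_ge1[OF r c] nz by auto
    then have False using bc by simp }
  then show ?thesis unfolding atomsS_def using Sr_one by auto
qed

lemma atom1_p:
  assumes rp: "r = of_nat p / of_nat q" and cp: "coprime p q" and p2: "p \<ge> 2" and q: "q > 0"
  shows "1 \<in> atomsS r"
proof -
  have r0: "r > 0" using rp p2 q by simp
  { fix b c assume b: "b \<in> Sr r" and c: "c \<in> Sr r" and bc: "1 = b + c" and nz: "b \<noteq> 0" "c \<noteq> 0"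
    have b0: "b \<ge> 0" "c \<ge> 0" using Sr_nonneg[OF r0] b c by auto
    have "\<exists>y. y \<in> Sr r \<and> b = r * y" if bb: "b \<in> Sr r" "b < 1" for b
    proof -
      obtain k y where ky: "y \<in> Sr r" "b = of_nat k + r * y" using Sr_split[OF bb(1)] by blast
      have "r * y \<ge> 0" using Sr_nonneg[OF r0 ky(1)] r0 by simp
      then have "of_nat k < (1::rat)" using ky bb(2) by linarith
      then have "k = 0" by simp
      then show ?thesis using ky by auto
    qed
    moreover have "b < 1" "c < 1" using bc nz b0 by auto
    ultimately obtain yb yc where y: "yb \<in> Sr r" "b = r*yb" "yc \<in> Sr r" "c = r*yc" using b c by blast
    have ys: "yb + yc \<in> Sr r" using Sr.add y by blast
    have yv: "yb + yc = of_nat q / of_nat p" using bc y rp p2 q by (simp add: field_simps)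
    obtain a j where aj: "(yb+yc) * of_nat (q^j) = of_nat a" using Sr_den[OF rp q ys] by blast
    have "of_nat (q^(Suc j)) = (of_nat (p * a) :: rat)" using aj yv p2 by (simp add: field_simps)
    then have "q^(Suc j) = p * a" using of_nat_eq_iff by blast
    then have "p dvd q^(Suc j)" by simp
    moreover have "coprime p (q^(Suc j))" using cp by simp
    ultimately have "p dvd 1" by (metis coprime_common_divisor dvd_refl)
    then have False using p2 by simp }
  then show ?thesis unfolding atomsS_def using Sr_one by auto
qed

lemma no_atoms_p1:
  assumes rp: "r = 1 / of_nat q" and q: "q \<ge> 2"
  shows "atomsS r = {}"
proof (rule ccontr)
  assume "atomsS r \<noteq> {}"
  then obtain a where a: "a \<in> atomsS r" by blast
  have r0: "r > 0" using rp q by simp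
  obtain n where an: "a = r^n" using atom_pow[OF r0 a] by blast
  have e: "r^n = r^(Suc n) + of_nat (q - 1) * r^(Suc n)"
  proof -
    have "r^(Suc n) + of_nat (q - 1) * r^(Suc n) = of_nat q * r^(Suc n)"
      using q by (simp add: algebra_simps of_nat_diff)
    also have "\<dots> = r^n" using rp q by simp
    finally show ?thesis by simp
  qed
  have "of_nat (q - 1) * r^(Suc n) \<in> Sr r" by (intro Sr_mult_nat Sr.gen)
  moreover have "r^(Suc n) \<in> Sr r" by (rule Sr.gen)
  moreover have "of_nat (q - 1) * r^(Suc n) \<noteq> 0" "r^(Suc n) \<noteq> 0" using q r0 by auto
  ultimately show False using a an e unfolding atomsS_def by blast
qed

lemma Sr_decomp_m:
  assumes rp: "r = of_nat p / of_nat q" and q: "q > 0" and x: "x \<in> Sr r"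
  shows "\<exists>a z. z \<in> Sr r \<and> x = of_nat a / of_nat (q^m) + r^(Suc m) * z"
  using x
proof (induction rule: Sr.induct)
  case zero then show ?case using Sr.zero[of r] by (intro exI[of _ 0] exI[of _ 0]) auto
next
  case (gen n)
  show ?case
  proof (cases "n \<le> m")
    case True
    have "r^n = of_nat (p^n * q^(m-n)) / of_nat (q^m)"
    proof -
      have "q^m = q^n * q^(m-n)" using True by (simp add: power_add[symmetric])
      then show ?thesis using rp q by (simp add: power_divide)
    qed
    then show ?thesis using Sr.zero[of r] by (intro exI[of _ "p^n * q^(m-n)"] exI[of _ 0]) auto
  next
    case False
    then have "r^n = r^(Suc m + (n - Suc m))" by simp
    then have "r^n = r^(Suc m) * r^(n - Suc m)" by (simp only: power_add)
    then show ?thesis using Sr.gen[of r "n - Suc m"] by (intro exI[of _ 0] exI[of _ "r^(n - Suc m)"]) auto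
  qed
next
  case (add x y)
  then obtain a1 z1 a2 z2 where "z1 \<in> Sr r" "x = of_nat a1 / of_nat (q^m) + r^(Suc m) * z1"
    "z2 \<in> Sr r" "y = of_nat a2 / of_nat (q^m) + r^(Suc m) * z2" by blast
  then show ?case using Sr.add[of z1 r z2]
    by (intro exI[of _ "a1+a2"] exI[of _ "z1+z2"]) (auto simp: algebra_simps add_divide_distrib)
qed

lemma atom_pow_gt:
  assumes rp: "r = of_nat p / of_nat q" and cp: "coprime p q" and q2: "q \<ge> 2" and r1: "r > 1"
  shows "r^(Suc m) \<in> atomsS r"
proof -
  have q: "q > 0" using q2 by simp
  { fix b c assume b: "b \<in> Sr r" and c: "c \<in> Sr r" and bc: "r^(Suc m) = b + c" and nz: "b \<noteq> 0" "c \<noteq> 0"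
    have small: "\<exists>a. x = of_nat a / of_nat (q^m)" if xx: "x \<in> Sr r" "x < r^(Suc m)" for x
    proof -
      obtain a z where az: "z \<in> Sr r" "x = of_nat a / of_nat (q^m) + r^(Suc m) * z"
        using Sr_decomp_m[OF rp q xx(1)] by blast
      have "z = 0"
      proof (rule ccontr)
        assume "z \<noteq> 0"
        then have "z \<ge> 1" using Sr_ge1[OF _ az(1)] r1 by auto
        then have "r^(Suc m) * z \<ge> r^(Suc m)" using r1 by simp
        moreover have "of_nat a / of_nat (q^m) \<ge> (0::rat)" by simp
        ultimately show False using az xx(2) by linarith
      qed
      then show ?thesis using az by auto
    qed
    have b0: "b \<ge> 0" "c \<ge> 0" using Sr_nonneg[of r b] Sr_nonneg[of r c] r1 b c by auto
    have "b < r^(Suc m)" "c < r^(Suc m)" using bc nz b0 by auto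
    then obtain a1 a2 where a: "b = of_nat a1 / of_nat (q^m)" "c = of_nat a2 / of_nat (q^m)"
      using small b c by blast
    have "r^(Suc m) * of_nat (q^(Suc m)) = of_nat (p^(Suc m))" using rp q by (simp add: power_divide)
    moreover have "r^(Suc m) * of_nat (q^(Suc m)) = of_nat (q * (a1 + a2))" using bc a q
      by (simp add: field_simps)
    ultimately have "p^(Suc m) = q * (a1+a2)" using of_nat_eq_iff by metis
    then have "q dvd p^(Suc m)" by simp
    moreover have "coprime q (p^(Suc m))" using cp by (simp add: coprime_commute)
    ultimately have "q dvd 1" by (metis coprime_common_divisor dvd_refl)
    then have False using q2 by simp }
  then show ?thesis unfolding atomsS_def using Sr.gen[of r "Suc m"] r1 by auto
qed




lemma Sr_int: assumes "r = of_nat n" shows "Sr r = range of_nat"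
proof
  show "Sr r \<subseteq> range of_nat"
  proof
    fix x assume "x \<in> Sr r" then show "x \<in> range of_nat"
    proof (induction rule: Sr.induct)
      case zero then show ?case by (metis of_nat_0 rangeI)
    next
      case (gen k) then show ?case using assms by (metis of_nat_power rangeI)
    next
      case (add x y)
      then obtain a b where "x = of_nat a" "y = of_nat b" by blast
      then have "x + y = of_nat (a + b)" by simp
      then show ?case by blast
    qed
  qed
  show "range of_nat \<subseteq> Sr r" using Sr_nat by auto
qed

lemma atoms_int: assumes "r = of_nat n" "n \<ge> 1" shows "atomsS r = {1}"
proof -
  have r1: "r \<ge> 1" using assms by simp
  have "1 \<in> atomsS r" using atom1_ge[OF r1] .
  moreover have "a = 1" if a: "a \<in> atomsS r" for a
  proof -
    have "a \<in> Sr r" "a \<noteq> 0" using a by (auto simp: atomsS_def)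
    then obtain k where k: "a = of_nat k" "k \<ge> 1" using Sr_int[OF assms(1)] by auto
    have "a = 1 + of_nat (k - 1)" using k by (simp add: of_nat_diff)
    moreover have "of_nat (k-1) \<in> Sr r" by (rule Sr_nat)
    ultimately have "of_nat (k - 1) = (0::rat)" using a Sr_one unfolding atomsS_def by force
    then show ?thesis using k by simp
  qed
  ultimately show ?thesis by blast
qed

lemma int_case:
  assumes "r = of_nat n" "n \<ge> 1"
  shows "omega_monoid r < \<infinity> \<and> globally_tame r \<and> locally_tame r"
proof -
  have at: "atomsS r = {1}" using atoms_int[OF assms] .
  have r0: "r > 0" using assms by simp
  have ob: "omega_bound r 1 1"
    unfolding omega_bound_def
  proof (intro allI impI)
    fix A :: "rat multiset" assume A: "set_mset A \<subseteq> atomsS r" "dvdS r 1 (sum_mset A)"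
    have "sum_mset A \<ge> 1" using dvdS_le[OF r0 A(2)] .
    then have "A \<noteq> {#}" by auto
    then have "1 \<in># A" using A(1) at by auto
    then have "{#1#} \<subseteq># A" by simp
    moreover have "dvdS r 1 1" unfolding dvdS_def using Sr.zero by force
    ultimately show "\<exists>B. B \<subseteq># A \<and> size B \<le> 1 \<and> dvdS r 1 (sum_mset B)"
      by (intro exI[of _ "{#1#}"]) auto
  qed
  have "omegaS r 1 < \<infinity>" using ob unfolding omegaS_def by auto
  then have om: "omega_monoid r < \<infinity>" unfolding omega_monoid_def at by simp
  have tb: "tame_bound r 1 0"
    unfolding tame_bound_def
  proof (intro ballI impI)
    fix x z assume x: "x \<in> Sr r" "dvdS r 1 x" and z: "z \<in> factorizations r x"
    have "x \<ge> 1" using dvdS_le[OF r0 x(2)] .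
    then have "z \<noteq> {#}" using z by (auto simp: factorizations_def)
    then have "1 \<in># z" using z at by (auto simp: factorizations_def)
    then show "\<exists>z'\<in>factorizations r x. 1 \<in># z' \<and> fdist z z' \<le> 0"
      using z by (intro bexI[of _ z]) (auto simp: fdist_def)
  qed
  have td: "tame_degree r 1 < \<infinity>" using tb unfolding tame_degree_def by auto
  show ?thesis using om td unfolding globally_tame_def locally_tame_def at by simp
qed




lemma len_lemma:
  fixes r :: rat and w :: "rat multiset"
  assumes rp: "r = of_nat p / of_nat q" and cp: "coprime p q" and q: "q > 0" and pq: "p > q"
  shows "set_mset w \<subseteq> range ((^) r) \<Longrightarrow> 1 \<in># w \<Longrightarrow> sum_mset w = of_nat d * r^k \<Longrightarrow> k+1 \<le> size w"
proof (induction k arbitrary: w d)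
  case 0 then have "w \<noteq> {#}" by auto
  then show ?case by (cases w) auto
next
  case (Suc k)
  have r0: "r > 0" using rp q pq by simp
  define w1 where "w1 = filter_mset (\<lambda>x. x \<noteq> 1) w"
  define e0 where "e0 = count w 1"
  have w0: "filter_mset (\<lambda>x. x = 1) w = replicate_mset e0 1" unfolding e0_def by (rule filter_eq_replicate_mset)
  have wsplit: "w = replicate_mset e0 1 + w1" unfolding w1_def w0[symmetric] by (rule multiset_partition)
  have e0pos: "e0 \<ge> 1" using Suc.prems(2) unfolding e0_def by (simp add: Suc_le_eq)
  define w1' where "w1' = image_mset (\<lambda>x. x / r) w1"
  define Y where "Y = sum_mset w1'"
  have w1pow: "\<exists>i. x = r^Suc i" if xw: "x \<in># w1" for x
  proof -
    have "x \<in># w" "x \<noteq> 1" using xw unfolding w1_def by auto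
    then obtain i where "x = r^i" "x \<noteq> 1" using Suc.prems(1) unfolding w1_def by auto
    then show ?thesis by (cases i) auto
  qed
  have w1'pow: "set_mset w1' \<subseteq> range ((^) r)"
  proof
    fix y assume "y \<in> set_mset w1'"
    then obtain x where x: "x \<in># w1" "y = x / r" unfolding w1'_def by auto
    then obtain i where "x = r^Suc i" using w1pow by blast
    then show "y \<in> range ((^) r)" using x r0 by auto
  qed
  have YS: "Y \<in> Sr r" unfolding Y_def
    by (rule Sr_sum_mset) (use w1'pow Sr.gen in blast)
  have sw1: "sum_mset w1 = r * Y"
  proof -
    have "r * Y = (\<Sum>x\<in>#w1. r * (x / r))" unfolding Y_def w1'_def by (simp add: sum_mset_distrib_left)
    also have "\<dots> = sum_mset w1" using r0 by simp
    finally show ?thesis by simp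
  qed
  have sw: "of_nat e0 + r * Y = of_nat d * r^Suc k" using Suc.prems(3) wsplit sw1 by simp
  have DS: "of_nat d * r^k \<in> Sr r" by (intro Sr_mult_nat Sr.gen)
  obtain a1 j1 where a1: "r * (of_nat d * r^k) * of_nat (q^j1) = of_nat (p * a1)" using Sr_den_r[OF rp q DS] by blast
  obtain a2 j2 where a2: "r * Y * of_nat (q^j2) = of_nat (p * a2)" using Sr_den_r[OF rp q YS] by blast
  have "(of_nat e0 + r * Y) * of_nat (q^j1) * of_nat (q^j2) = r * (of_nat d * r^k) * of_nat (q^j1) * of_nat (q^j2)"
    using sw by simp
  then have "of_nat e0 * of_nat (q^j1) * of_nat (q^j2) + (r * Y * of_nat (q^j2)) * of_nat (q^j1) = (r * (of_nat d * r^k) * of_nat (q^j1)) * of_nat (q^j2)"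
    by (simp add: algebra_simps)
  then have "of_nat (e0 * q^j1 * q^j2 + p * a2 * q^j1) = (of_nat (p * a1 * q^j2) :: rat)"
    unfolding a1 a2 by simp
  then have eqn: "e0 * q^j1 * q^j2 + p * a2 * q^j1 = p * a1 * q^j2" using of_nat_eq_iff by blast
  have "p dvd e0 * (q^j1 * q^j2)"
  proof -
    have "p dvd e0 * q^j1 * q^j2 + p * a2 * q^j1" unfolding eqn by simp
    then show ?thesis by (simp add: dvd_add_left_iff mult.assoc)
  qed
  moreover have "coprime p (q^j1 * q^j2)" using cp by simp
  ultimately have "p dvd e0" using coprime_dvd_mult_left_iff by blast
  then obtain t where t: "e0 = p * t" by blast
  have t1: "t \<ge> 1" using t e0pos by (cases t) auto
  define w'' where "w'' = w1' + replicate_mset (t*q) 1"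
  have "r * (Y + of_nat (t*q)) = r * Y + of_nat e0"
    using t rp q by (simp add: field_simps)
  also have "\<dots> = r * (of_nat d * r^k)" using sw by (simp add: algebra_simps)
  finally have "Y + of_nat (t*q) = of_nat d * r^k" using r0 by simp
  then have s'': "sum_mset w'' = of_nat d * r^k" unfolding w''_def Y_def by simp
  have set'': "set_mset w'' \<subseteq> range ((^) r)" unfolding w''_def using w1'pow
    by auto (metis power_0 rangeI)
  have one'': "1 \<in># w''" unfolding w''_def using t1 q by simp
  have "k + 1 \<le> size w''" using Suc.IH[OF set'' one'' s''] .
  then have "k + 1 \<le> size w1 + t*q" unfolding w''_def w1'_def by simp
  moreover have "size w = e0 + size w1" using wsplit by simp
  moreover have "t*q < e0" using t t1 pq by simp
  ultimately show ?case by simp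
qed




lemma split_count: "z = replicate_mset (count z a) a + filter_mset (\<lambda>y. y \<noteq> a) z"
proof -
  have "z = {#y \<in># z. y = a#} + {#y \<in># z. \<not> y = a#}" by (rule multiset_partition)
  then show ?thesis by (simp only: filter_eq_replicate_mset)
qed

lemma inter_le: assumes "set_mset z \<subseteq> {a}" shows "size (z \<inter># z') \<le> count z' a"
proof -
  have "z \<inter># z' \<subseteq># replicate_mset (count z' a) a"
    unfolding subseteq_mset_def
  proof
    fix y show "count (z \<inter># z') y \<le> count (replicate_mset (count z' a) a) y"
    proof (cases "y = a")
      case True then show ?thesis by simp
    next
      case False then have "count z y = 0" using assms by (auto simp: count_eq_zero_iff)
      then show ?thesis by simp
    qed
  qed
  then show ?thesis using size_mset_mono by fastforce
qed

lemma fdist_ge1: "size z - size (z \<inter># z') \<le> fdist z z'" unfolding fdist_def by simp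
lemma fdist_ge2: "size z' - size (z \<inter># z') \<le> fdist z z'" unfolding fdist_def by simp

lemma sum_atoms_Sr: "r > 0 \<Longrightarrow> set_mset z \<subseteq> atomsS r \<Longrightarrow> sum_mset z \<in> Sr r"
  by (rule Sr_sum_mset) (auto simp: atomsS_def)

lemma sum_atoms_nonneg: "r > 0 \<Longrightarrow> set_mset z \<subseteq> atomsS r \<Longrightarrow> sum_mset z \<ge> 0"
  using sum_atoms_Sr Sr_nonneg by blast

lemma bern: "(x::rat) \<ge> 0 \<Longrightarrow> 1 + of_nat k * x \<le> (1+x)^k"
proof (induction k)
  case 0 then show ?case by simp
next
  case (Suc k)
  have "1 + of_nat (Suc k) * x \<le> (1 + of_nat k * x) * (1 + x)"
    using Suc.prems by (simp add: algebra_simps)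
  also have "\<dots> \<le> (1+x)^k * (1+x)" using Suc by (intro mult_right_mono) auto
  finally show ?case by (simp add: mult.commute)
qed

lemma pow_big: assumes "(r::rat) > 1" shows "\<exists>k. N < r^k"
proof -
  obtain k where k: "N < of_nat k * (r - 1)" using ex_less_of_nat_mult[of "r-1" N] assms by auto
  have "1 + of_nat k * (r-1) \<le> (1 + (r-1))^k" using bern[of "r-1" k] assms by simp
  then show ?thesis using k by (intro exI[of _ k]) simp
qed

lemma pow_small: assumes "(r::rat) > 0" "r < 1" shows "\<exists>k. of_nat n * r^k < 1"
proof -
  obtain k where k: "of_nat n < (1/r)^k" using pow_big[of "1/r" "of_nat n"] assms by auto
  have "(1/r)^k = 1 / r^k" by (simp add: power_divide)
  then have "of_nat n * r^k < 1" using k assms by (simp add: field_simps)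
  then show ?thesis by blast
qed

lemma omega_inf_of_bound:
  assumes "a \<in> atomsS r" "\<forall>n>0. \<not> omega_bound r a n"
  shows "omega_monoid r = \<infinity>"
proof -
  have "omegaS r a = \<infinity>" using assms(2) unfolding omegaS_def by auto
  then show ?thesis unfolding omega_monoid_def using SUP_upper[OF assms(1), of "omegaS r"]
    by (simp add: top_le[unfolded top_enat_def])
qed

lemma not_locally_tame:
  assumes "a \<in> atomsS r" "\<forall>n. \<not> tame_bound r a n"
  shows "\<not> locally_tame r"
  using assms unfolding locally_tame_def tame_degree_def by auto




lemma case_gt1:
  fixes r :: rat
  assumes rp: "r = of_nat p / of_nat q" and cp: "coprime p q" and q2: "q \<ge> 2" and r1: "r > 1"
  shows "omega_monoid r = \<infinity> \<and> \<not> locally_tame r"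
proof -
  have q: "q > 0" using q2 by simp
  have r0: "r > 0" using r1 by simp
  have pq: "p > q" using r1 rp q by (simp add: field_simps)
  have one: "1 \<in> atomsS r" using atom1_ge r1 by simp
  have rpow: "r^k * of_nat (q^k) = of_nat (p^k)" for k using rp q by (simp add: power_divide)
  have ob: "r^(Suc m) \<le> of_nat n" if ob: "omega_bound r (r^Suc m) n" for m n
  proof -
    define M where "M = Suc m"
    define A where "A = replicate_mset (p^M) (1::rat)"
    have Aat: "set_mset A \<subseteq> atomsS r" unfolding A_def using one by auto
    have "of_nat (p^M) = r^M + of_nat (q^M - 1) * r^M"
    proof -
      have "r^M + of_nat (q^M - 1) * r^M = r^M * of_nat (q^M)"
        using q by (simp add: algebra_simps of_nat_diff)
      then show ?thesis using rpow by simp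
    qed
    moreover have "of_nat (q^M - 1) * r^M \<in> Sr r" by (intro Sr_mult_nat Sr.gen)
    ultimately have "dvdS r (r^M) (sum_mset A)" unfolding dvdS_def A_def by auto
    then obtain B where B: "B \<subseteq># A" "size B \<le> n" "dvdS r (r^M) (sum_mset B)"
      using ob Aat unfolding omega_bound_def M_def by blast
    have "set_mset B \<subseteq> {1}" using B(1) unfolding A_def
      by (metis insert_subset_eq_iff order_trans set_mset_mono set_mset_replicate_mset_subset empty_subsetI)
    then have "B = replicate_mset (size B) 1" by (rule set_mset_subset_singletonD)
    then have "sum_mset B = of_nat (size B)" by (metis sum_mset_replicate_mset mult.right_neutral)
    then have "r^M \<le> of_nat (size B)" using dvdS_le[OF r0 B(3)] by simp
    also have "\<dots> \<le> of_nat n" using B(2) by simp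
    finally show ?thesis unfolding M_def .
  qed
  have om: "omega_monoid r = \<infinity>"
  proof (rule ccontr)
    assume "omega_monoid r \<noteq> \<infinity>"
    then obtain N where N: "omega_monoid r = enat N" by (cases "omega_monoid r") auto
    obtain k where k: "of_nat N < r^k" using pow_big[OF r1] by blast
    have kk: "r^k \<le> r^(Suc k)" using r1 by (intro power_increasing) auto
    have k': "of_nat N < r^Suc k" using k kk by (rule less_le_trans)
    have at: "r^Suc k \<in> atomsS r" using atom_pow_gt[OF rp cp q2 r1] .
    have "omegaS r (r^Suc k) \<le> enat N"
      using SUP_upper[OF at, of "omegaS r"] N unfolding omega_monoid_def by simp
    then have ex: "\<exists>n>0. omega_bound r (r^Suc k) n" unfolding omegaS_def by (auto split: if_splits)
    let ?L = "LEAST n. n > 0 \<and> omega_bound r (r^Suc k) n"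
    have L: "?L > 0 \<and> omega_bound r (r^Suc k) ?L" using LeastI_ex[OF ex] .
    have "omegaS r (r^Suc k) = enat ?L" using ex unfolding omegaS_def by simp
    with \<open>omegaS r (r^Suc k) \<le> enat N\<close> have "?L \<le> N" by simp
    moreover have "r^Suc k \<le> of_nat ?L" using ob L by blast
    ultimately show False using k' by (meson le_less_trans not_less of_nat_le_iff)
  qed
  have tb: "\<not> tame_bound r 1 n" for n
  proof
    assume tb: "tame_bound r 1 n"
    define k where "k = Suc n"
    define x where "x = (of_nat (p^k) :: rat)"
    define z where "z = replicate_mset (q^k) (r^k)"
    have xS: "x \<in> Sr r" unfolding x_def by (rule Sr_nat)
    have p1: "p^k \<ge> 1" using pq by simp
    have "x = 1 + of_nat (p^k - 1)" unfolding x_def using p1 by (simp add: of_nat_diff)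
    then have xd: "dvdS r 1 x" unfolding dvdS_def using Sr_nat by blast
    have atk: "r^k \<in> atomsS r" unfolding k_def using atom_pow_gt[OF rp cp q2 r1] by simp
    have zf: "z \<in> factorizations r x" unfolding factorizations_def z_def x_def
      using atk rpow[of k] by (simp add: mult.commute)
    obtain z' where z': "z' \<in> factorizations r x" "1 \<in># z'" "fdist z z' \<le> n"
      using tb xS xd zf unfolding tame_bound_def by blast
    define c where "c = count z' (r^k)"
    define w where "w = filter_mset (\<lambda>y. y \<noteq> r^k) z'"
    have zsplit: "z' = replicate_mset c (r^k) + w" unfolding c_def w_def by (rule split_count)
    have rk1: "r^k \<noteq> 1" using r1 unfolding k_def by (metis less_numeral_extra(4) one_less_power zero_less_Suc)
    have w1: "1 \<in># w" using z'(2) rk1 unfolding w_def by simp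
    have z'at: "set_mset z' \<subseteq> atomsS r" using z'(1) unfolding factorizations_def by simp
    have wat: "set_mset w \<subseteq> atomsS r" using z'at unfolding w_def by auto
    have sz': "sum_mset z' = x" using z'(1) unfolding factorizations_def by simp
    have sw: "of_nat c * r^k + sum_mset w = of_nat (q^k) * r^k"
      using sz' zsplit rpow[of k] unfolding x_def by (simp add: mult.commute)
    have "sum_mset w \<ge> 0" using sum_atoms_nonneg[OF r0 wat] .
    then have "of_nat c * r^k \<le> of_nat (q^k) * r^k" using sw by linarith
    then have cq: "c \<le> q^k" using r0 by simp
    have swd: "sum_mset w = of_nat (q^k - c) * r^k" using sw cq by (simp add: of_nat_diff algebra_simps)
    have "k + 1 \<le> size w"
      using len_lemma[OF rp cp q pq _ w1 swd] wat atoms_sub[OF r0] by blast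
    moreover have "size (z \<inter># z') \<le> c" unfolding c_def z_def by (rule inter_le) simp
    moreover have "size z' = c + size w" using zsplit by simp
    moreover have "size z' - size (z \<inter># z') \<le> n" using fdist_ge2[of z' z] z'(3) by simp
    ultimately show False unfolding k_def by linarith
  qed
  have "\<not> locally_tame r" using not_locally_tame[OF one] tb by blast
  with om show ?thesis by blast
qed




lemma sum_mset_pick: fixes z :: "'a::comm_monoid_add multiset" shows "b \<in># z \<Longrightarrow> sum_mset z = b + sum_mset (z - {#b#})"
proof -
  assume "b \<in># z"
  then have "z = add_mset b (z - {#b#})" by simp
  then show ?thesis by (metis sum_mset.add_mset)
qed

lemma small_atom:
  fixes r :: rat
  assumes rp: "r = of_nat p / of_nat q" and q: "q > 0" and r0: "r > 0" and r1: "r < 1"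
    and at: "atomic r"
  shows "\<exists>b c j. b \<in> atomsS r \<and> b > 0 \<and> b < 1 \<and> of_nat (Suc n) * b < 1
             \<and> b * of_nat (q^j) = of_nat c \<and> c \<ge> 1"
proof -
  obtain k where k: "of_nat (Suc n) * r^k < 1" using pow_small[OF r0 r1] by blast
  have rkS: "r^k \<in> Sr r" by (rule Sr.gen)
  have rk0: "r^k \<noteq> 0" using r0 by simp
  obtain z0 where z0: "z0 \<in> factorizations r (r^k)" using at rkS rk0 unfolding atomic_def by blast
  have z0at: "set_mset z0 \<subseteq> atomsS r" and z0s: "sum_mset z0 = r^k" using z0 unfolding factorizations_def by auto
  have "z0 \<noteq> {#}" using z0s rk0 by auto
  then obtain b where b: "b \<in># z0" by auto
  have bat: "b \<in> atomsS r" using b z0at by auto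
  have "sum_mset z0 = b + sum_mset (z0 - {#b#})" using b by (rule sum_mset_pick)
  moreover have "sum_mset (z0 - {#b#}) \<ge> 0"
    using sum_atoms_nonneg[OF r0, of "z0 - {#b#}"] z0at by (meson in_diffD subset_iff)
  ultimately have bk: "b \<le> r^k" using z0s by simp
  have bS: "b \<in> Sr r" "b \<noteq> 0" using bat unfolding atomsS_def by auto
  have bpos: "b > 0" using Sr_nonneg[OF r0 bS(1)] bS(2) by simp
  have "of_nat (Suc n) * b \<le> of_nat (Suc n) * r^k" using bk by (intro mult_left_mono) auto
  then have nb: "of_nat (Suc n) * b < 1" using k by linarith
  have "b \<le> of_nat (Suc n) * b" using bpos by simp
  with nb have b1: "b < 1" by simp
  obtain c j where cj: "b * of_nat (q^j) = of_nat c" using Sr_den[OF rp q bS(1)] by blast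
  have "b * of_nat (q^j) > 0" using bpos q by simp
  then have "of_nat c > (0::rat)" using cj by simp
  then have "c \<ge> 1" by simp
  then show ?thesis using bat bpos b1 nb cj by blast
qed

lemma case_lt1:
  fixes r :: rat
  assumes rp: "r = of_nat p / of_nat q" and cp: "coprime p q" and q: "q > 0" and p2: "p \<ge> 2"
    and r1: "r < 1" and at: "atomic r"
  shows "omega_monoid r = \<infinity> \<and> \<not> locally_tame r"
proof -
  have r0: "r > 0" using rp p2 q by simp
  have one: "1 \<in> atomsS r" using atom1_p[OF rp cp p2 q] .
  have ob: "\<not> omega_bound r 1 n" if "n > 0" for n
  proof
    assume ob: "omega_bound r 1 n"
    obtain b c j where b: "b \<in> atomsS r" "b > 0" "b < 1" "of_nat (Suc n) * b < 1"
      "b * of_nat (q^j) = of_nat c" "c \<ge> 1" using small_atom[OF rp q r0 r1 at] by blast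
    define A where "A = replicate_mset (q^j) b"
    have Aat: "set_mset A \<subseteq> atomsS r" unfolding A_def using b by auto
    have sA: "sum_mset A = of_nat c" unfolding A_def using b(5) by (simp add: mult.commute)
    have "of_nat c = 1 + of_nat (c - 1)" using b(6) by (cases c) auto
    then have "dvdS r 1 (sum_mset A)" unfolding dvdS_def sA using Sr_nat by blast
    then obtain B where B: "B \<subseteq># A" "size B \<le> n" "dvdS r 1 (sum_mset B)"
      using ob Aat unfolding omega_bound_def by blast
    have "set_mset B \<subseteq> {b}" using B(1) unfolding A_def
      by (metis insert_subset_eq_iff order_trans set_mset_mono set_mset_replicate_mset_subset empty_subsetI)
    then have "B = replicate_mset (size B) b" by (rule set_mset_subset_singletonD)
    then have "sum_mset B = of_nat (size B) * b" by (metis sum_mset_replicate_mset)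
    then have "1 \<le> of_nat (size B) * b" using dvdS_le[OF r0 B(3)] by simp
    also have "\<dots> \<le> of_nat (Suc n) * b" using B(2) b(2) by (intro mult_right_mono) auto
    finally show False using b(4) by simp
  qed
  have om: "omega_monoid r = \<infinity>" using omega_inf_of_bound[OF one] ob by blast
  have tb: "\<not> tame_bound r 1 n" for n
  proof
    assume tb: "tame_bound r 1 n"
    obtain b c j where b: "b \<in> atomsS r" "b > 0" "b < 1" "of_nat (Suc n) * b < 1"
      "b * of_nat (q^j) = of_nat c" "c \<ge> 1" using small_atom[OF rp q r0 r1 at] by blast
    define N where "N = q^j"
    define z where "z = replicate_mset N b"
    define x where "x = (of_nat c :: rat)"
    have zat: "set_mset z \<subseteq> atomsS r" unfolding z_def using b by auto
    have sz: "sum_mset z = x" unfolding z_def x_def N_def using b(5) by (simp add: mult.commute)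
    have zf: "z \<in> factorizations r x" unfolding factorizations_def using zat sz by simp
    have xS: "x \<in> Sr r" unfolding x_def by (rule Sr_nat)
    have "x = 1 + of_nat (c - 1)" unfolding x_def using b(6) by (cases c) auto
    then have xd: "dvdS r 1 x" unfolding dvdS_def using Sr_nat by blast
    obtain z' where z': "z' \<in> factorizations r x" "1 \<in># z'" "fdist z z' \<le> n"
      using tb xS xd zf unfolding tame_bound_def by blast
    define e where "e = count z' b"
    define w where "w = filter_mset (\<lambda>y. y \<noteq> b) z'"
    have zsplit: "z' = replicate_mset e b + w" unfolding e_def w_def by (rule split_count)
    have w1: "1 \<in># w" using z'(2) b(3) unfolding w_def by simp
    have z'at: "set_mset z' \<subseteq> atomsS r" using z'(1) unfolding factorizations_def by simp
    have wat: "set_mset w \<subseteq> atomsS r" using z'at unfolding w_def by auto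
    have "sum_mset w = 1 + sum_mset (w - {#1#})" using w1 by (rule sum_mset_pick)
    moreover have "sum_mset (w - {#1#}) \<ge> 0"
      using sum_atoms_nonneg[OF r0, of "w - {#1#}"] wat by (meson in_diffD subset_iff)
    ultimately have sw1: "sum_mset w \<ge> 1" by simp
    have sz': "sum_mset z' = x" using z'(1) unfolding factorizations_def by simp
    have "of_nat e * b + sum_mset w = of_nat N * b"
      using sz' zsplit sz unfolding z_def by simp
    then have eN: "of_nat e * b + 1 \<le> of_nat N * b" using sw1 by linarith
    then have "of_nat e * b < of_nat N * b" by simp
    then have eltN: "e < N" using b(2) by simp
    have "1 \<le> (of_nat N - of_nat e) * b" using eN by (simp add: algebra_simps)
    then have D: "1 \<le> of_nat (N - e) * b" using eltN by (simp add: of_nat_diff)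
    have "size (z \<inter># z') \<le> e" unfolding e_def z_def by (rule inter_le) simp
    then have "N - e \<le> size z - size (z \<inter># z')" unfolding z_def by simp
    also have "\<dots> \<le> n" using fdist_ge1[of z z'] z'(3) by simp
    finally have "of_nat (N - e) * b \<le> of_nat (Suc n) * b" using b(2) by (intro mult_right_mono) auto
    then show False using D b(4) by linarith
  qed
  have "\<not> locally_tame r" using not_locally_tame[OF one] tb by blast
  with om show ?thesis by blast
qed


lemma glob_loc: "globally_tame r \<Longrightarrow> locally_tame r"
  unfolding globally_tame_def locally_tame_def
  by (meson SUP_upper le_less_trans)

theorem theorem5p5:
  fixes r :: rat
  assumes "r > 0" and "atomic r"
  shows "((\<exists>n::nat. r = of_nat n) \<longleftrightarrow> omega_monoid r < \<infinity>)
       \<and> (omega_monoid r < \<infinity> \<longleftrightarrow> globally_tame r)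
       \<and> (globally_tame r \<longleftrightarrow> locally_tame r)"
proof (cases "\<exists>n::nat. r = of_nat n")
  case True
  then obtain n where n: "r = of_nat n" by blast
  then have "n \<ge> 1" using assms(1) by (cases n) auto
  then show ?thesis using int_case[OF n] True by blast
next
  case False
  obtain p q where pq: "r = of_nat p / of_nat q" "coprime p q" "p > 0" "q > 0" using rat_pq[OF assms(1)] by blast
  have "q \<noteq> 1" using False pq(1) by auto
  then have q2: "q \<ge> 2" using pq(4) by simp
  have "r \<noteq> 1" using False by (metis of_nat_1)
  have res: "omega_monoid r = \<infinity> \<and> \<not> locally_tame r"
  proof (cases "r > 1")
    case True then show ?thesis using case_gt1[OF pq(1,2) q2] by blast
  next
    case r1: False
    with \<open>r \<noteq> 1\<close> have r1: "r < 1" by simp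
    have "p \<noteq> 1"
    proof
      assume "p = 1"
      then have "r = 1 / of_nat q" using pq(1) by simp
      then have ae: "atomsS r = {}" using no_atoms_p1 q2 by blast
      have "1 \<in> Sr r" "(1::rat) \<noteq> 0" using Sr_one by auto
      then obtain z where "z \<in> factorizations r 1" using assms(2) unfolding atomic_def by blast
      then have "set_mset z \<subseteq> {}" "sum_mset z = 1" using ae unfolding factorizations_def by auto
      then show False by simp
    qed
    then have p2: "p \<ge> 2" using pq(3) by simp
    show ?thesis using case_lt1[OF pq(1,2,4) p2 r1 assms(2)] .
  qed
  then have "\<not> globally_tame r" using glob_loc by blast
  then show ?thesis using res False by simp
qed

end
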